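(* Let $n\ge2$, $C>0$, let $x\in\mathcal{K}_{S+}$ with $x_1\le x_2\le\dots\le x_n$, and let $\tilde{x}=x+\eta$ where either $\eta$ has i.i.d. Laplace entries with mean $0$ and scale $b>0$, or $\eta\sim\mathcal{N}(0,\sigma^2I_n)$ with $\sigma>0$. Let $\alpha=\max_{i}\mathcal{B}(\pi_{S+})_i-\min_i\mathcal{B}(\pi_{S+})_i$. Then $$\alpha\ge \mathcal{B}((\pi_S)_+)_1-\mathcal{B}((\pi_S)_+)_n,$$ and $$\alpha\le\min\Big\{x_n-x_1,\ \mathcal{B}((\pi_S)_+)_1-\mathcal{B}((\pi_S)_+)_n+\sum_{i=1}^n\mathbb{E}\big[(\pi_S(\tilde{x})_i)_-\big]\Big\}.$$
   Context: Let $C>0$, $\mathcal{K}_S=\{v\in\mathbb{R}^n:\sum_i v_i=C\}$, $\mathcal{K}_{S+}=\{v\in\mathcal{K}_S:v\ge0\}$; $\pi_S$ and $\pi_{S+}$ are the Euclidean projections onto $\mathcal{K}_S$ and $\mathcal{K}_{S+}$. $(y)_+=\max\{y,0\}$, $(y)_-=-\min\{y,0\}$ componentwise. For a map $\pi:\mathbb{R}^n\to\mathbb{R}^n$, $\mathcal{B}(\pi)=\mathbb{E}_{\tilde{x}}[\pi(\tilde{x})]-x$; in particular $\mathcal{B}((\pi_S)_+)=\mathbb{E}_{\tilde{x}}[(\pi_S(\tilde{x}))_+]-x$. *)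

theory Defs
  imports "HOL-Analysis.Analysis" "HOL-Probability.Probability"
begin

definition KS :: "real \<Rightarrow> (real ^ 'n) set" where
  "KS C = {v. (\<Sum>i\<in>UNIV. v $ i) = C}"

definition KSplus :: "real \<Rightarrow> (real ^ 'n) set" where
  "KSplus C = {v \<in> KS C. \<forall>i. 0 \<le> v $ i}"

definition piS :: "real \<Rightarrow> real ^ 'n \<Rightarrow> real ^ 'n" where
  "piS C y = closest_point (KS C) y"

definition piSplus :: "real \<Rightarrow> real ^ 'n \<Rightarrow> real ^ 'n" where
  "piSplus C y = closest_point (KSplus C) y"

definition pos_part_vec :: "real ^ 'n \<Rightarrow> real ^ 'n" where
  "pos_part_vec v = (\<chi> i. max (v $ i) 0)"

definition negp :: "real \<Rightarrow> real" where
  "negp y = - min y 0"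

definition bias :: "(real ^ 'n) measure \<Rightarrow> (real ^ 'n \<Rightarrow> real ^ 'n) \<Rightarrow> real ^ 'n \<Rightarrow> real ^ 'n" where
  "bias M p x = (\<integral>\<eta>. p (x + \<eta>) \<partial>M) - x"

definition laplace_density :: "real \<Rightarrow> real \<Rightarrow> real" where
  "laplace_density b t = exp (- \<bar>t\<bar> / b) / (2 * b)"

definition laplace_noise :: "real \<Rightarrow> (real ^ 'n) measure" where
  "laplace_noise b = density lborel (\<lambda>v. ennreal (\<Prod>i\<in>UNIV. laplace_density b (v $ i)))"

definition gaussian_noise :: "real \<Rightarrow> (real ^ 'n) measure" where
  "gaussian_noise \<sigma> = density lborel (\<lambda>v. ennreal (\<Prod>i\<in>UNIV. normal_density 0 \<sigma> (v $ i)))"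

end

theory Submission
  imports Defs
begin


lemma closest_point_char:
  fixes S :: "'a::euclidean_space set"
  assumes "convex S" "closed S" "p \<in> S" "\<forall>z\<in>S. inner (a - p) (z - p) \<le> 0"
  shows "closest_point S a = p"
proof -
  have "\<forall>z\<in>S. dist a p \<le> dist a z"
  proof
    fix z assume z: "z \<in> S"
    have e: "a - z = (a - p) - (z - p)" by simp
    have gen: "inner (u - w) (u - w) = inner u u - 2 * inner u w + inner w w" for u w :: 'a
      by (simp add: inner_diff_left inner_diff_right inner_commute[of w u])
    have "(norm (a - z))^2 = inner (a - p) (a - p) - 2 * inner (a-p) (z-p) + inner (z - p) (z - p)"
      unfolding e power2_norm_eq_inner by (rule gen)
    moreover have "inner (a-p) (z-p) \<le> 0" using assms(4) z by blast
    moreover have "0 \<le> inner (z - p) (z - p)" by (rule inner_ge_zero)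
    moreover have "(norm (a-p))^2 = inner (a-p) (a-p)" by (rule power2_norm_eq_inner)
    ultimately have "(norm (a-p))^2 \<le> (norm (a - z))^2" by linarith
    then show "dist a p \<le> dist a z" unfolding dist_norm by (rule power2_le_imp_le) simp
  qed
  then show ?thesis by (rule closest_point_unique[OF assms(1-3), symmetric])
qed

lemma KS_convex: "convex (KS C :: (real^'n) set)"
  unfolding KS_def convex_def
  by (auto simp: sum.distrib sum_distrib_left[symmetric]) (metis distrib_right mult_1)

lemma KS_closed: "closed (KS C :: (real^'n) set)"
  unfolding KS_def
  by (intro closed_Collect_eq continuous_intros)

lemma KSplus_eq: "KSplus C = KS C \<inter> (\<Inter>i. {v::real^'n. 0 \<le> v $ i})"
  unfolding KSplus_def by auto

lemma KSplus_convex: "convex (KSplus C :: (real^'n) set)"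
  unfolding KSplus_eq
  by (intro convex_Int KS_convex convex_INT) (auto simp: convex_def)

lemma KSplus_closed: "closed (KSplus C :: (real^'n) set)"
  unfolding KSplus_eq
  by (intro closed_Int KS_closed closed_INT ballI closed_Collect_le continuous_intros) 

lemma piS_formula:
  "piS C (y::real^'n) = (\<chi> i. y $ i - ((\<Sum>k\<in>UNIV. y $ k) - C) / CARD('n))"
proof -
  define t where "t = ((\<Sum>k\<in>UNIV. y $ k) - C) / CARD('n)"
  define p where "p = (\<chi> i. y $ i - t :: real^'n)"
  have pK: "p \<in> KS C"
    unfolding KS_def p_def t_def by (simp add: sum_subtractf)
  have "\<forall>z\<in>KS C. inner (y - p) (z - p) \<le> 0"
  proof
    fix z :: "real^'n" assume "z \<in> KS C"
    then have "(\<Sum>i\<in>UNIV. z $ i) = C" by (simp add: KS_def)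
    moreover have "(\<Sum>i\<in>UNIV. p $ i) = C" using pK by (simp add: KS_def)
    moreover have "inner (y - p) (z - p) = (\<Sum>i\<in>UNIV. t * (z$i - p$i))"
      by (simp add: inner_vec_def p_def)
    moreover have "\<dots> = t * ((\<Sum>i\<in>UNIV. z$i) - (\<Sum>i\<in>UNIV. p$i))"
      by (simp add: sum_distrib_left[symmetric] sum_subtractf)
    ultimately show "inner (y - p) (z - p) \<le> 0" by simp
  qed
  then have "piS C y = p"
    unfolding piS_def by (intro closest_point_char KS_convex KS_closed pK)
  then show ?thesis by (simp add: p_def t_def)
qed

lemma piSplus_formula:
  assumes "(\<Sum>i\<in>UNIV. max (y $ i - \<tau>) 0) = C"
  shows "piSplus C (y::real^'n) = (\<chi> i. max (y $ i - \<tau>) 0)"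
proof -
  define p where "p = (\<chi> i. max (y $ i - \<tau>) 0 :: real^'n)"
  have pK: "p \<in> KSplus C"
    unfolding KSplus_def KS_def p_def using assms by simp
  have "\<forall>z\<in>KSplus C. inner (y - p) (z - p) \<le> 0"
  proof
    fix z :: "real^'n" assume "z \<in> KSplus C"
    then have zs: "(\<Sum>i\<in>UNIV. z $ i) = C" and zn: "\<And>i. 0 \<le> z $ i" by (auto simp: KSplus_def KS_def)
    have "inner (y - p) (z - p) = (\<Sum>i\<in>UNIV. (y$i - p$i) * (z$i - p$i))"
      by (simp add: inner_vec_def)
    also have "\<dots> \<le> (\<Sum>i\<in>UNIV. \<tau> * (z$i - p$i))"
    proof (rule sum_mono)
      fix i
      show "(y$i - p$i) * (z$i - p$i) \<le> \<tau> * (z$i - p$i)"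
      proof (cases "y $ i \<ge> \<tau>")
        case True then show ?thesis by (simp add: p_def)
      next
        case False then show ?thesis using zn[of i] by (simp add: p_def mult_right_mono)
      qed
    qed
    also have "\<dots> = \<tau> * ((\<Sum>i\<in>UNIV. z$i) - (\<Sum>i\<in>UNIV. p$i))"
      by (simp add: sum_distrib_left[symmetric] sum_subtractf)
    also have "(\<Sum>i\<in>UNIV. p$i) = C" using assms by (simp add: p_def)
    also have "\<tau> * ((\<Sum>i\<in>UNIV. z$i) - C) = 0" using zs by simp
    finally show "inner (y - p) (z - p) \<le> 0" .
  qed
  then have "piSplus C y = p"
    unfolding piSplus_def by (intro closest_point_char KSplus_convex KSplus_closed pK)
  then show ?thesis by (simp add: p_def)
qed

lemma tau_exists:
  assumes "C > 0"
  shows "\<exists>\<tau>. (\<Sum>i\<in>UNIV. max ((y::real^'n) $ i - \<tau>) 0) = C"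
proof -
  define A where "A = (\<Sum>i\<in>UNIV. \<bar>y $ i\<bar>)"
  have yA: "\<bar>y $ i\<bar> \<le> A" for i
    unfolding A_def by (rule member_le_sum) auto
  define \<phi> where "\<phi> t = (\<Sum>i\<in>UNIV. max (y $ i - t) 0)" for t
  obtain k :: 'n where True by blast
  have "\<phi> A = 0" unfolding \<phi>_def using yA by (intro sum.neutral) (auto simp: abs_le_iff)
  moreover have "C \<le> \<phi> (- A - C)"
  proof -
    have "C \<le> max (y $ k - (- A - C)) 0" using yA[of k] by (auto simp: abs_le_iff)
    also have "\<dots> \<le> \<phi> (- A - C)" unfolding \<phi>_def by (rule member_le_sum) auto
    finally show ?thesis .
  qed
  moreover have "- A - C \<le> A" using assms yA[of k] by auto
  moreover have "\<forall>t. isCont \<phi> t" unfolding \<phi>_def by (intro allI continuous_intros)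
  ultimately obtain t where "\<phi> t = C"
    using IVT2[of \<phi> A C "- A - C"] assms by force
  then show ?thesis unfolding \<phi>_def by blast
qed



definition swi :: "'n \<Rightarrow> 'n \<Rightarrow> 'n \<Rightarrow> 'n" where
  "swi i j k = (if k = i then j else if k = j then i else k)"

definition swv :: "'n::finite \<Rightarrow> 'n \<Rightarrow> real^'n \<Rightarrow> real^'n" where
  "swv i j v = (\<chi> k. v $ swi i j k)"

lemma swi_swi[simp]: "swi i j (swi i j k) = k"
  by (auto simp: swi_def)

lemma swi_i[simp]: "swi i j i = j" and swi_j[simp]: "swi i j j = i"
  by (auto simp: swi_def)

lemma swi_other[simp]: "k \<noteq> i \<Longrightarrow> k \<noteq> j \<Longrightarrow> swi i j k = k"
  by (auto simp: swi_def)

lemma bij_swi: "bij (swi i j)"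
  by (metis bijI' swi_swi)

lemma all_swi: "(\<forall>k. P (swi i j k)) \<longleftrightarrow> (\<forall>k. P k)"
  by (metis swi_swi)

lemma swv_nth[simp]: "swv i j v $ k = v $ swi i j k"
  by (simp add: swv_def)

lemma swv_swv[simp]: "swv i j (swv i j v) = v"
  by (simp add: vec_eq_iff)

lemma swv_add: "swv i j (u + v) = swv i j u + swv i j v"
  and swv_diff: "swv i j (u - v) = swv i j u - swv i j v"
  by (simp_all add: vec_eq_iff)

lemma linear_swv: "linear (swv i j)"
  by (rule linearI) (simp_all add: vec_eq_iff)

lemma swv_measurable[measurable]: "swv i j \<in> borel_measurable borel"
  by (intro borel_measurable_continuous_onI linear_continuous_on) (simp add: linear_conv_bounded_linear[symmetric] linear_swv)

lemma sum_swi: "(\<Sum>k\<in>UNIV. g (swi i j k)) = (\<Sum>k\<in>UNIV. (g k :: 'a::comm_monoid_add))"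
  by (rule sum.reindex_bij_betw[OF bij_swi[unfolded bij_betw_def[symmetric]]])

lemma prod_swi: "(\<Prod>k\<in>UNIV. g (swi i j k)) = (\<Prod>k\<in>UNIV. (g k :: 'a::comm_monoid_mult))"
  by (rule prod.reindex_bij_betw[OF bij_swi[unfolded bij_betw_def[symmetric]]])

lemma Basis_cart_real: "(Basis :: (real^'n) set) = range (\<lambda>k. axis k 1)"
  by (auto simp: Basis_vec_def)

lemma prod_Basis_cart: "(\<Prod>b\<in>(Basis::(real^'n) set). g b) = (\<Prod>k\<in>UNIV. (g (axis k 1) :: 'a::comm_monoid_mult))"
  unfolding Basis_cart_real
  by (subst prod.reindex) (auto simp: inj_on_def axis_eq_axis)

lemma lborel_swv: "distr lborel borel (swv i j) = (lborel :: (real^'n::finite) measure)"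
proof (rule lborel_eqI[symmetric])
  fix l u :: "real^'n" assume le: "\<And>b. b\<in>Basis \<Longrightarrow> l\<bullet>b \<le> u\<bullet>b"
  then have le': "l $ k \<le> u $ k" for k
    by (simp add: cart_eq_inner_axis Basis_cart_real)
  have pre: "swv i j -` box l u = box (swv i j l) (swv i j u)"
  proof -
    have "v \<in> swv i j -` box l u \<longleftrightarrow> v \<in> box (swv i j l) (swv i j u)" for v
    proof -
      have "v \<in> swv i j -` box l u \<longleftrightarrow> (\<forall>k. l $ k < v $ swi i j k \<and> v $ swi i j k < u $ k)"
        by (simp add: mem_box_cart)
      also have "\<dots> \<longleftrightarrow> (\<forall>k. l $ swi i j k < v $ k \<and> v $ k < u $ swi i j k)"
        using all_swi[where i=i and j=j and P="\<lambda>k. l $ swi i j k < v $ k \<and> v $ k < u $ swi i j k"] by simp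
      also have "\<dots> \<longleftrightarrow> v \<in> box (swv i j l) (swv i j u)" by (simp add: mem_box_cart)
      finally show ?thesis .
    qed
    then show ?thesis by blast
  qed
  have "emeasure (distr lborel borel (swv i j)) (box l u) = emeasure lborel (box (swv i j l) (swv i j u))"
    by (simp add: emeasure_distr pre)
  also have "\<dots> = (\<Prod>b\<in>Basis. (swv i j u - swv i j l) \<bullet> b)"
  proof (rule emeasure_lborel_box)
    fix b :: "real^'n" assume "b \<in> Basis"
    then obtain k where b: "b = axis k 1" by (auto simp: Basis_cart_real)
    show "swv i j l \<bullet> b \<le> swv i j u \<bullet> b"
      unfolding b cart_eq_inner_axis[symmetric] by (simp add: le')
  qed
  also have "\<dots> = (\<Prod>k\<in>UNIV. (u - l) $ swi i j k)"
    by (simp add: prod_Basis_cart cart_eq_inner_axis[symmetric])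
  also have "\<dots> = (\<Prod>k\<in>UNIV. (u - l) $ k)"
    using prod_swi[where g="\<lambda>k. (u - l) $ k" and i=i and j=j] by simp
  also have "\<dots> = (\<Prod>b\<in>Basis. (u - l) \<bullet> b)"
    by (simp add: prod_Basis_cart cart_eq_inner_axis[symmetric])
  finally show "emeasure (distr lborel borel (swv i j)) (box l u) = (\<Prod>b\<in>Basis. (u - l) \<bullet> b)" .
qed simp

lemma lborel_pres:
  fixes g :: "'a::euclidean_space \<Rightarrow> real"
  assumes T[measurable]: "T \<in> borel_measurable borel" and D: "distr lborel borel T = lborel"
    and g[measurable]: "g \<in> borel_measurable borel"
  shows "integral\<^sup>L lborel g = integral\<^sup>L lborel (\<lambda>w. g (T w))"
    and "integrable lborel g \<longleftrightarrow> integrable lborel (\<lambda>w. g (T w))"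
proof -
  have Tm: "T \<in> measurable lborel borel" by simp
  show "integral\<^sup>L lborel g = integral\<^sup>L lborel (\<lambda>w. g (T w))"
    using integral_distr[OF Tm g] D by simp
  show "integrable lborel g \<longleftrightarrow> integrable lborel (\<lambda>w. g (T w))"
    using integrable_distr_eq[OF Tm g] D by simp
qed



definition rho :: "(real \<Rightarrow> real) \<Rightarrow> real^'n::finite \<Rightarrow> real" where
  "rho f v = (\<Prod>i\<in>UNIV. f (v $ i))"

definition MM :: "(real \<Rightarrow> real) \<Rightarrow> (real^'n::finite) measure" where
  "MM f = density lborel (\<lambda>v. ennreal (rho f v))"

locale noise_dens =
  fixes f :: "real \<Rightarrow> real"
  assumes f_nonneg: "\<And>t. 0 \<le> f t"
    and f_meas[measurable]: "f \<in> borel_measurable borel"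
    and f_int: "(\<integral>\<^sup>+t. ennreal (f t) \<partial>lborel) = 1"
    and f_mom: "(\<integral>\<^sup>+t. ennreal (\<bar>t\<bar> * f t) \<partial>lborel) < \<infinity>"
    and f_tp2: "\<And>s t d. s \<le> t \<Longrightarrow> 0 \<le> d \<Longrightarrow> f s * f (t + d) \<le> f (s + d) * f t"
begin

lemma sets_MM[measurable_cong, simp]: "sets (MM f :: (real^'n::finite) measure) = sets borel"
  by (simp add: MM_def)

lemma space_MM[simp]: "space (MM f :: (real^'n::finite) measure) = UNIV"
  by (simp add: MM_def)

lemma rho_nonneg: "0 \<le> rho f v"
  unfolding rho_def by (intro prod_nonneg) (simp add: f_nonneg)

lemma rho_meas[measurable]: "rho f \<in> borel_measurable borel"
  unfolding rho_def by measurable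

lemma rho_swv: "rho f (swv i j v) = rho f v"
  unfolding rho_def using prod_swi[where g="\<lambda>k. f (v $ k)" and i=i and j=j] by simp

lemma rho_ennreal: "ennreal (rho f v) = (\<Prod>b\<in>Basis. ennreal (f (v \<bullet> b)))"
  unfolding rho_def prod_Basis_cart cart_eq_inner_axis[symmetric]
  by (simp add: prod_ennreal f_nonneg)

lemma prob: "prob_space (MM f :: (real^'n::finite) measure)"
proof
  have "emeasure (MM f) (space (MM f) :: (real^'n) set) = (\<integral>\<^sup>+v. ennreal (rho f (v::real^'n)) \<partial>lborel)"
    unfolding MM_def by (subst emeasure_density) auto
  also have "\<dots> = (\<integral>\<^sup>+v. (\<Prod>b\<in>(Basis :: (real^'n) set). ennreal (f (v \<bullet> b))) \<partial>lborel)"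
    by (simp add: rho_ennreal)
  also have "\<dots> = (\<Prod>b\<in>(Basis :: (real^'n) set). (\<integral>\<^sup>+t. ennreal (f t) \<partial>lborel))"
    by (rule nn_integral_lborel_prod) auto
  also have "\<dots> = 1" by (simp add: f_int)
  finally show "emeasure (MM f) (space (MM f) :: (real^'n) set) = 1" .
qed

lemma moment: "integrable (MM f :: (real^'n::finite) measure) (\<lambda>v. v $ k)"
proof (rule integrableI_bounded)
  define g where "g b = (if b = axis k 1 then (\<lambda>t. ennreal (\<bar>t\<bar> * f t)) else (\<lambda>t. ennreal (f t)))"
    for b :: "real^'n"
  have "(\<integral>\<^sup>+v. ennreal (norm (v $ k)) \<partial>MM f) = (\<integral>\<^sup>+v. ennreal (rho f v) * ennreal \<bar>v $ k\<bar> \<partial>lborel)"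
    unfolding MM_def by (simp add: nn_integral_density)
  also have "\<dots> = (\<integral>\<^sup>+v. (\<Prod>b\<in>(Basis :: (real^'n) set). g b (v \<bullet> b)) \<partial>lborel)"
  proof (rule nn_integral_cong)
    fix v :: "real^'n"
    have "(\<Prod>b\<in>(Basis :: (real^'n) set). g b (v \<bullet> b)) = (\<Prod>q\<in>UNIV. g (axis q 1) (v $ q))"
      by (simp add: prod_Basis_cart cart_eq_inner_axis[symmetric])
    also have "\<dots> = g (axis k 1) (v $ k) * (\<Prod>q\<in>UNIV - {k}. g (axis q 1) (v $ q))"
      by (simp add: prod.remove)
    also have "\<dots> = ennreal (\<bar>v $ k\<bar> * f (v $ k)) * (\<Prod>q\<in>UNIV - {k}. ennreal (f (v $ q)))"
      by (auto simp: g_def axis_eq_axis intro!: prod.cong)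
    also have "\<dots> = ennreal (rho f v) * ennreal \<bar>v $ k\<bar>"
      unfolding rho_def
      by (simp add: prod.remove[where x=k] prod_ennreal f_nonneg ennreal_mult'[symmetric] 
          prod_nonneg mult_ac)
    finally show "ennreal (rho f v) * ennreal \<bar>v $ k\<bar> = (\<Prod>b\<in>(Basis :: (real^'n) set). g b (v \<bullet> b))" ..
  qed
  also have "\<dots> = (\<Prod>b\<in>(Basis :: (real^'n) set). (\<integral>\<^sup>+t. g b t \<partial>lborel))"
    by (rule nn_integral_lborel_prod) (auto simp: g_def)
  also have "\<dots> < \<infinity>"
  proof -
    have fin: "(\<integral>\<^sup>+t. g b t \<partial>lborel) \<noteq> \<top>" for b
      using f_mom by (auto simp: g_def f_int less_top)
    have "(\<Prod>b\<in>(Basis :: (real^'n) set). (\<integral>\<^sup>+t. g b t \<partial>lborel)) \<noteq> \<top>"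
      by (subst ennreal_prod_eq_top) (use fin in auto)
    then show ?thesis by (simp add: less_top)
  qed
  finally show "(\<integral>\<^sup>+v. ennreal (norm (v $ k)) \<partial>MM f) < \<infinity>" .
qed (simp add: MM_def)

end


lemma prod_split2:
  fixes g :: "'n::finite \<Rightarrow> real"
  assumes "i \<noteq> j"
  shows "(\<Prod>k\<in>UNIV. g k) = g i * g j * (\<Prod>k\<in>UNIV - {i, j}. g k)"
proof -
  have "(\<Prod>k\<in>UNIV. g k) = g i * (\<Prod>k\<in>UNIV - {i}. g k)" by (simp add: prod.remove)
  also have "(\<Prod>k\<in>UNIV - {i}. g k) = g j * (\<Prod>k\<in>UNIV - {i} - {j}. g k)"
    using assms by (intro prod.remove) auto
  finally show ?thesis by (simp add: Diff_insert2[symmetric] insert_commute mult.assoc)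
qed

context noise_dens
begin

lemma rho_tp2:
  fixes w x :: "real^'n::finite"
  assumes ij: "i \<noteq> j" and xij: "x $ i \<le> x $ j"
  shows "w $ i \<le> w $ j \<Longrightarrow> rho f (w - swv i j x) \<le> rho f (w - x)"
    and "w $ j \<le> w $ i \<Longrightarrow> rho f (w - x) \<le> rho f (w - swv i j x)"
proof -
  define R where "R = (\<Prod>k\<in>UNIV - {i, j}. f (w $ k - x $ k))"
  have R0: "0 \<le> R" unfolding R_def by (intro prod_nonneg) (simp add: f_nonneg)
  have r1: "rho f (w - x) = f (w $ i - x $ i) * f (w $ j - x $ j) * R"
    unfolding rho_def R_def using prod_split2[OF ij, of "\<lambda>k. f ((w - x) $ k)"] by simp
  have RR: "(\<Prod>k\<in>UNIV - {i, j}. f (w $ k - x $ swi i j k)) = R"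
    unfolding R_def by (intro prod.cong) auto
  have r2: "rho f (w - swv i j x) = f (w $ i - x $ j) * f (w $ j - x $ i) * R"
    unfolding rho_def using prod_split2[OF ij, of "\<lambda>k. f ((w - swv i j x) $ k)"] ij RR
    by simp
  show "w $ i \<le> w $ j \<Longrightarrow> rho f (w - swv i j x) \<le> rho f (w - x)"
  proof -
    assume w: "w $ i \<le> w $ j"
    have "f (w $ i - x $ j) * f ((w $ j - x $ j) + (x $ j - x $ i)) \<le> f ((w $ i - x $ j) + (x $ j - x $ i)) * f (w $ j - x $ j)"
      using w xij by (intro f_tp2) auto
    then have "f (w $ i - x $ j) * f (w $ j - x $ i) \<le> f (w $ i - x $ i) * f (w $ j - x $ j)" by simp
    then show ?thesis unfolding r1 r2 using R0 by (intro mult_right_mono)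
  qed
  show "w $ j \<le> w $ i \<Longrightarrow> rho f (w - x) \<le> rho f (w - swv i j x)"
  proof -
    assume w: "w $ j \<le> w $ i"
    have "f (w $ j - x $ j) * f ((w $ i - x $ j) + (x $ j - x $ i)) \<le> f ((w $ j - x $ j) + (x $ j - x $ i)) * f (w $ i - x $ j)"
      using w xij by (intro f_tp2) auto
    then have "f (w $ i - x $ i) * f (w $ j - x $ j) \<le> f (w $ i - x $ j) * f (w $ j - x $ i)"
      by (simp add: mult.commute)
    then show ?thesis unfolding r1 r2 using R0 by (intro mult_right_mono)
  qed
qed

lemma integral_MM:
  fixes h :: "real^'n::finite \<Rightarrow> real"
  assumes [measurable]: "h \<in> borel_measurable borel"
  shows "(\<integral>v. h (x + v) \<partial>MM f) = (\<integral>w. rho f (w - x) * h w \<partial>lborel)"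
    and "integrable (MM f) (\<lambda>v. h (x + v)) \<longleftrightarrow> integrable lborel (\<lambda>w. rho f (w - x) * h w)"
proof -
  have D: "distr lborel borel ((+) x) = (lborel :: (real^'n) measure)" by (rule lborel_distr_plus)
  have m: "(\<lambda>w. rho f (w - x) * h w) \<in> borel_measurable borel" by measurable
  have "(\<integral>v. h (x + v) \<partial>MM f) = (\<integral>v. rho f v * h (x + v) \<partial>lborel)"
    unfolding MM_def by (subst integral_density) (auto simp: rho_nonneg)
  also have "\<dots> = (\<integral>w. rho f (w - x) * h w \<partial>lborel)"
    using lborel_pres(1)[OF _ D m] by simp
  finally show "(\<integral>v. h (x + v) \<partial>MM f) = (\<integral>w. rho f (w - x) * h w \<partial>lborel)" .
  have "integrable (MM f) (\<lambda>v. h (x + v)) \<longleftrightarrow> integrable lborel (\<lambda>v. rho f v * h (x + v))"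
    unfolding MM_def by (subst integrable_density) (auto simp: rho_nonneg)
  also have "\<dots> \<longleftrightarrow> integrable lborel (\<lambda>w. rho f (w - x) * h w)"
    using lborel_pres(2)[OF _ D m] by simp
  finally show "integrable (MM f) (\<lambda>v. h (x + v)) \<longleftrightarrow> integrable lborel (\<lambda>w. rho f (w - x) * h w)" .
qed

lemma swap_ineq:
  fixes x :: "real^'n::finite" and h :: "real^'n \<Rightarrow> real"
  assumes ij: "i \<noteq> j" and xij: "x $ i \<le> x $ j"
    and hm[measurable]: "h \<in> borel_measurable borel"
    and anti: "\<And>y. h (swv i j y) = - h y"
    and pos: "\<And>y. y $ i \<le> y $ j \<Longrightarrow> 0 \<le> h y"
    and int: "integrable (MM f) (\<lambda>v. h (x + v))"
  shows "0 \<le> (\<integral>v. h (x + v) \<partial>MM f)"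
proof -
  define F where "F w = rho f (w - x) * h w" for w
  define G where "G w = rho f (w - swv i j x) * h w" for w
  have [measurable]: "F \<in> borel_measurable borel" "G \<in> borel_measurable borel"
    unfolding F_def G_def by measurable
  have I: "(\<integral>v. h (x + v) \<partial>MM f) = integral\<^sup>L lborel F"
    unfolding F_def by (rule integral_MM(1)) simp
  have iF: "integrable lborel F" using int unfolding F_def by (subst (asm) integral_MM(2)) simp
  have FG: "F (swv i j w) = - G w" for w
  proof -
    have "swv i j w - x = swv i j (w - swv i j x)" by (simp add: swv_diff)
    then show ?thesis unfolding F_def G_def by (simp add: rho_swv anti)
  qed
  have D: "distr lborel borel (swv i j) = (lborel :: (real^'n) measure)" by (rule lborel_swv)
  have e1: "integral\<^sup>L lborel F = - integral\<^sup>L lborel G"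
    using lborel_pres(1)[OF _ D, of F] by (simp add: FG)
  have iG: "integrable lborel G"
    using lborel_pres(2)[OF _ D, of F] iF by (simp add: FG)
  have "0 \<le> integral\<^sup>L lborel (\<lambda>w. F w - G w)"
  proof (rule integral_nonneg_AE, rule AE_I2)
    fix w :: "real^'n"
    have "F w - G w = h w * (rho f (w - x) - rho f (w - swv i j x))"
      unfolding F_def G_def by (simp add: algebra_simps)
    also have "0 \<le> \<dots>"
    proof (cases "w $ i \<le> w $ j")
      case True
      then show ?thesis using pos[OF True] rho_tp2(1)[OF ij xij True] by simp
    next
      case False
      then have w: "w $ j \<le> w $ i" by simp
      have "0 \<le> h (swv i j w)" using w by (intro pos) simp
      then have "h w \<le> 0" using anti[of w] by simp
      then show ?thesis using rho_tp2(2)[OF ij xij w] by (simp add: mult_nonpos_nonpos)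
    qed
    finally show "0 \<le> F w - G w" .
  qed
  also have "\<dots> = integral\<^sup>L lborel F - integral\<^sup>L lborel G"
    using iF iG by simp
  finally show ?thesis using I e1 by simp
qed

end


lemma vec_nth_comp_meas[measurable]:
  fixes g :: "'a \<Rightarrow> real^'n::finite"
  shows "g \<in> borel_measurable M \<Longrightarrow> (\<lambda>v. g v $ k) \<in> borel_measurable M"
  by (erule measurable_compose) (intro borel_measurable_continuous_onI continuous_intros)

lemma max_ineq1: "(a::real) \<le> b \<Longrightarrow> t' \<le> \<tau> \<Longrightarrow>
   0 \<le> (max (a - \<tau>) 0 - max (b - \<tau>) 0) - (max (a - t') 0 - max (b - t') 0)"
  by (cases "a \<le> \<tau>"; cases "b \<le> \<tau>"; cases "a \<le> t'"; cases "b \<le> t'"; simp)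

lemma max_ineq2: "t' \<le> \<tau> \<Longrightarrow>
   (max ((a::real) - \<tau>) 0 - max (b - \<tau>) 0) - (max (a - t') 0 - max (b - t') 0) \<le> \<tau> - t'"
  by (cases "a \<le> \<tau>"; cases "b \<le> \<tau>"; cases "a \<le> t'"; cases "b \<le> t'"; simp)

lemma max_ineq3: "(a::real) \<le> b \<Longrightarrow> max (b - \<tau>) 0 - max (a - \<tau>) 0 \<le> b - a"
  by (cases "a \<le> \<tau>"; cases "b \<le> \<tau>"; simp)

lemma KSplus_ne: "C > 0 \<Longrightarrow> KSplus C \<noteq> ({} :: (real^'n::finite) set)"
proof -
  assume C: "C > 0"
  have "(\<chi> k. C / CARD('n)) \<in> (KSplus C :: (real^'n) set)"
    using C by (simp add: KSplus_def KS_def)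
  then show ?thesis by blast
qed

lemma piSplus_meas[measurable]: "C > 0 \<Longrightarrow> piSplus C \<in> borel_measurable (borel :: (real^'n::finite) measure)"
  unfolding piSplus_def
  by (intro borel_measurable_continuous_onI continuous_on_closest_point KSplus_convex KSplus_closed KSplus_ne)

lemma piS_meas[measurable]: "piS C \<in> borel_measurable (borel :: (real^'n::finite) measure)"
  unfolding piS_formula[abs_def]
  by (intro borel_measurable_continuous_onI continuous_intros) auto

lemma piSplus_tau:
  assumes "C > 0"
  shows "\<exists>\<tau>. piSplus C y = (\<chi> k. max ((y::real^'n::finite) $ k - \<tau>) 0) \<and> (\<Sum>k\<in>UNIV. max (y $ k - \<tau>) 0) = C"
  using tau_exists[OF assms, of y] piSplus_formula by blast

lemma tau_ge:
  assumes "(\<Sum>k\<in>UNIV. max ((y::real^'n::finite) $ k - \<tau>) 0) = C"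
  shows "((\<Sum>k\<in>UNIV. y $ k) - C) / CARD('n) \<le> \<tau>"
proof -
  have "(\<Sum>k\<in>UNIV. y $ k - \<tau>) \<le> C"
    unfolding assms[symmetric] by (intro sum_mono) simp
  then have "(\<Sum>k\<in>UNIV. y $ k) - CARD('n) * \<tau> \<le> C" by (simp add: sum_subtractf)
  then show ?thesis by (simp add: divide_le_eq mult.commute)
qed

lemma tau_le:
  assumes C: "C > 0" and s: "(\<Sum>k\<in>UNIV. max ((y::real^'n::finite) $ k - \<tau>) 0) = C"
  shows "\<tau> - ((\<Sum>k\<in>UNIV. y $ k) - C) / CARD('n) \<le> (\<Sum>k\<in>UNIV. negp (y $ k - ((\<Sum>k\<in>UNIV. y $ k) - C) / CARD('n)))"
proof -
  define t where "t = ((\<Sum>k\<in>UNIV. y $ k) - C) / CARD('n)"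
  have tt: "t \<le> \<tau>" using tau_ge[OF s] by (simp add: t_def)
  obtain k0 where k0: "y $ k0 - \<tau> > 0"
  proof (rule ccontr)
    assume "\<not> thesis"
    then have "\<forall>k. y $ k - \<tau> \<le> 0" using that by (meson not_less)
    then have "(\<Sum>k\<in>UNIV. max (y $ k - \<tau>) 0) = 0" by (intro sum.neutral) auto
    then show False using s C by simp
  qed
  have st: "(\<Sum>k\<in>UNIV. y $ k - t) = C"
    by (simp add: t_def sum_subtractf)
  have "(\<Sum>k\<in>UNIV. max (y $ k - t) 0) = (\<Sum>k\<in>UNIV. (y $ k - t) + negp (y $ k - t))"
    by (intro sum.cong) (auto simp: negp_def)
  also have "\<dots> = C + (\<Sum>k\<in>UNIV. negp (y $ k - t))" by (simp add: sum.distrib st)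
  finally have e1: "(\<Sum>k\<in>UNIV. max (y $ k - t) 0) = C + (\<Sum>k\<in>UNIV. negp (y $ k - t))" .
  have "\<tau> - t = max (y $ k0 - t) 0 - max (y $ k0 - \<tau>) 0" using k0 tt by auto
  also have "\<dots> \<le> (\<Sum>k\<in>UNIV. max (y $ k - t) 0 - max (y $ k - \<tau>) 0)"
    by (rule member_le_sum) (use tt in auto)
  also have "\<dots> = (\<Sum>k\<in>UNIV. negp (y $ k - t))"
    using e1 s by (simp add: sum_subtractf)
  finally show ?thesis by (simp add: t_def)
qed

lemma piSplus_swv:
  assumes "C > 0"
  shows "piSplus C (swv i j y) = swv i j (piSplus C (y::real^'n::finite))"
proof -
  obtain \<tau> where t: "piSplus C y = (\<chi> k. max (y $ k - \<tau>) 0)" "(\<Sum>k\<in>UNIV. max (y $ k - \<tau>) 0) = C"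
    using piSplus_tau[OF assms] by blast
  have "(\<Sum>k\<in>UNIV. max (swv i j y $ k - \<tau>) 0) = C"
    using sum_swi[where g="\<lambda>k. max (y $ k - \<tau>) 0" and i=i and j=j] t(2) by simp
  then have "piSplus C (swv i j y) = (\<chi> k. max (swv i j y $ k - \<tau>) 0)" by (rule piSplus_formula)
  then show ?thesis using t(1) by (simp add: vec_eq_iff)
qed

lemma piS_swv: "piS C (swv i j y) = swv i j (piS C (y::real^'n::finite))"
  unfolding piS_formula
  using sum_swi[where g="\<lambda>k. y $ k" and i=i and j=j] by (simp add: vec_eq_iff)

lemma piSplus_bounds:
  assumes "C > 0"
  shows "0 \<le> piSplus C (y::real^'n::finite) $ k" "piSplus C y $ k \<le> C"
proof -
  obtain \<tau> where t: "piSplus C y = (\<chi> k. max (y $ k - \<tau>) 0)" "(\<Sum>k\<in>UNIV. max (y $ k - \<tau>) 0) = C"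
    using piSplus_tau[OF assms] by blast
  show "0 \<le> piSplus C y $ k" using t by simp
  have "max (y $ k - \<tau>) 0 \<le> (\<Sum>k\<in>UNIV. max (y $ k - \<tau>) 0)" by (rule member_le_sum) auto
  then show "piSplus C y $ k \<le> C" using t by simp
qed

lemma vec_integrable:
  fixes g :: "'a \<Rightarrow> real^'n::finite"
  assumes "\<And>k. integrable M (\<lambda>x. g x $ k)" and "g \<in> borel_measurable M"
  shows "integrable M g"
proof -
  have i: "integrable M (\<lambda>x. \<Sum>k\<in>UNIV. \<bar>g x $ k\<bar>)" using assms(1) by auto
  show ?thesis
    by (rule Bochner_Integration.integrable_bound[OF i assms(2)], rule AE_I2)
       (use norm_le_l1_cart in \<open>simp add: sum_nonneg\<close>)
qed



context noise_dens
begin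

lemma mean_eq:
  fixes i j :: "'n::finite"
  shows "(\<integral>v. v $ i \<partial>(MM f :: (real^'n::finite) measure)) = (\<integral>v. v $ j \<partial>MM f)"
proof -
  have D: "distr lborel borel (swv i j) = (lborel :: (real^'n) measure)" by (rule lborel_swv)
  have "(\<integral>v. v $ i \<partial>(MM f :: (real^'n::finite) measure)) = (\<integral>w. rho f (w - 0) * w $ i \<partial>lborel)"
    using integral_MM(1)[of "\<lambda>v. v $ i" 0] by simp
  also have "\<dots> = (\<integral>w. rho f (swv i j w - 0) * swv i j w $ i \<partial>lborel)"
    by (rule lborel_pres(1)[OF _ D]) simp_all
  also have "\<dots> = (\<integral>w. rho f (w - 0) * w $ j \<partial>lborel)" by (simp add: rho_swv)
  also have "\<dots> = (\<integral>v. v $ j \<partial>(MM f :: (real^'n::finite) measure))"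
    using integral_MM(1)[of "\<lambda>v. v $ j" 0] by simp
  finally show ?thesis .
qed

lemma main:
  fixes x :: "real ^ 'n::{finite,linorder}" and C :: real
  assumes n2: "CARD('n) \<ge> 2"
    and Cpos: "C > 0"
    and xK: "x \<in> KSplus C"
    and sorted: "\<forall>i j. i \<le> j \<longrightarrow> x $ i \<le> x $ j"
  shows "let \<alpha> = Max (range (\<lambda>i. bias (MM f) (piSplus C) x $ i))
                 - Min (range (\<lambda>i. bias (MM f) (piSplus C) x $ i));
             Bp = bias (MM f) (\<lambda>y. pos_part_vec (piS C y)) x;
             i1 = Min (UNIV :: 'n::{finite,linorder} set); iN = Max (UNIV :: 'n::{finite,linorder} set)
         in \<alpha> \<ge> Bp $ i1 - Bp $ iN
          \<and> \<alpha> \<le> min (x $ iN - x $ i1)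
                     (Bp $ i1 - Bp $ iN + (\<Sum>i\<in>UNIV. \<integral>\<eta>. negp (piS C (x + \<eta>) $ i) \<partial>(MM f)))"
proof -
  have PS: "prob_space (MM f :: (real^'n::{finite,linorder}) measure)" by (rule prob)
  interpret P: prob_space "MM f :: (real^'n::{finite,linorder}) measure" by (rule PS)
  have pu: "P.prob UNIV = 1" using P.prob_space by simp
  have pm[measurable]: "piSplus C \<in> borel_measurable (borel :: (real^'n::{finite,linorder}) measure)"
    using piSplus_meas Cpos by blast
  define P where "P k = (\<integral>v. piSplus C (x + v) $ k \<partial>MM f)" for k
  define Q where "Q k = (\<integral>v. max (piS C (x + v) $ k) 0 \<partial>MM f)" for k
  define N where "N k = (\<integral>v. negp (piS C (x + v) $ k) \<partial>MM f)" for k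
  have ip: "integrable (MM f) (\<lambda>v. piSplus C (x + v) $ k)" for k
  proof (rule Bochner_Integration.integrable_bound[OF P.integrable_const[of C]])
    show "AE v in MM f. norm (piSplus C (x + v) $ k) \<le> norm C"
    proof (rule AE_I2)
      fix v :: "real^'n::{finite,linorder}"
      have "0 \<le> piSplus C (x + v) $ k" "piSplus C (x + v) $ k \<le> C"
        using piSplus_bounds[OF Cpos] by blast+
      then show "norm (piSplus C (x + v) $ k) \<le> norm C" by simp
    qed
  qed measurable
  have iv: "integrable (MM f) (\<lambda>v::real^'n::{finite,linorder}. v $ k)" for k by (rule moment)
  have iq: "integrable (MM f) (\<lambda>v. piS C (x + v) $ k)" for k
  proof -
    have isum: "integrable (MM f) (\<lambda>v::real^'n::{finite,linorder}. (\<Sum>l\<in>UNIV. v $ l))" using Bochner_Integration.integrable_sum[where I=UNIV and f="\<lambda>l v. v $ l"] iv by blast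
    have "integrable (MM f) (\<lambda>v::real^'n::{finite,linorder}. x $ k + v $ k - ((\<Sum>l\<in>UNIV. x $ l) + (\<Sum>l\<in>UNIV. v $ l) - C) / real CARD('n))"
    proof -
      have a: "integrable (MM f) (\<lambda>v. x $ k + v $ k)" by (rule Bochner_Integration.integrable_add[OF P.integrable_const iv])
      have b: "integrable (MM f) (\<lambda>v::real^'n::{finite,linorder}. (\<Sum>l\<in>UNIV. x $ l) + (\<Sum>l\<in>UNIV. v $ l) - C)"
        by (rule Bochner_Integration.integrable_diff[OF Bochner_Integration.integrable_add[OF P.integrable_const isum] P.integrable_const])
      show ?thesis by (rule Bochner_Integration.integrable_diff[OF a Bochner_Integration.integrable_divide_zero[OF b]])
    qed
    then show ?thesis unfolding piS_formula by (simp add: sum.distrib)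
  qed
  have iqp: "integrable (MM f) (\<lambda>v. max (piS C (x + v) $ k) 0)" for k
    using iq by auto
  have iqn: "integrable (MM f) (\<lambda>v. negp (piS C (x + v) $ k))" for k
    unfolding negp_def using iq by auto
  have bias1: "bias (MM f) (piSplus C) x $ k = P k - x $ k" for k
  proof -
    have vi: "integrable (MM f) (\<lambda>v. piSplus C (x + v))"
      by (rule vec_integrable[OF ip]) simp
    show ?thesis unfolding bias_def P_def
      using integral_bounded_linear[OF bounded_linear_vec_nth vi, of k] by simp
  qed
  have bias2: "bias (MM f) (\<lambda>y. pos_part_vec (piS C y)) x $ k = Q k - x $ k" for k
  proof -
    have vi: "integrable (MM f) (\<lambda>v. pos_part_vec (piS C (x + v)))"
    proof (rule vec_integrable)
      show "integrable (MM f) (\<lambda>v. pos_part_vec (piS C (x + v)) $ k)" for k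
        using iqp by (simp add: pos_part_vec_def)
      have mb: "(\<lambda>v::real^'n::{finite,linorder}. pos_part_vec (piS C (x + v))) \<in> borel_measurable borel"
        unfolding pos_part_vec_def piS_formula by (intro borel_measurable_continuous_onI continuous_intros) auto
      show "(\<lambda>v. pos_part_vec (piS C (x + v))) \<in> borel_measurable (MM f)"
        by (subst measurable_cong_sets[OF sets_MM refl]) (rule mb)
    qed
    show ?thesis unfolding bias_def Q_def
      using integral_bounded_linear[OF bounded_linear_vec_nth vi, of k] 
      by (simp add: pos_part_vec_def)
  qed
  have Pa: "P i \<le> P j" if ij: "i \<le> j" for i j
  proof (cases "i = j")
    case True then show ?thesis by simp
  next
    case False
    have "0 \<le> (\<integral>v. piSplus C (x + v) $ j - piSplus C (x + v) $ i \<partial>MM f)"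
    proof (rule swap_ineq[OF False, where h="\<lambda>y. piSplus C y $ j - piSplus C y $ i"])
      show "x $ i \<le> x $ j" using sorted ij by blast
      show "(\<lambda>y. piSplus C y $ j - piSplus C y $ i) \<in> borel_measurable borel" by measurable
      show "piSplus C (swv i j y) $ j - piSplus C (swv i j y) $ i = - (piSplus C y $ j - piSplus C y $ i)" for y
        by (simp add: piSplus_swv[OF Cpos])
      show "0 \<le> piSplus C y $ j - piSplus C y $ i" if "y $ i \<le> y $ j" for y
      proof -
        obtain \<tau> where t: "piSplus C y = (\<chi> k. max (y $ k - \<tau>) 0)"
          using piSplus_tau[OF Cpos] by blast
        show ?thesis using that unfolding t by auto
      qed
      show "integrable (MM f) (\<lambda>v. piSplus C (x + v) $ j - piSplus C (x + v) $ i)"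
        using ip by auto
    qed
    then show ?thesis unfolding P_def using ip by simp
  qed
  have Pb: "P j - P i \<le> x $ j - x $ i" if ij: "i \<le> j" for i j
  proof (cases "i = j")
    case True then show ?thesis by simp
  next
    case False
    define h where "h y = (y $ j - y $ i) - (piSplus C y $ j - piSplus C y $ i)" for y :: "real^'n::{finite,linorder}"
    have ih: "integrable (MM f) (\<lambda>v. h (x + v))"
      unfolding h_def using ip iv by auto
    have "0 \<le> (\<integral>v. h (x + v) \<partial>MM f)"
    proof (rule swap_ineq[OF False, where h=h])
      show "x $ i \<le> x $ j" using sorted ij by blast
      show "h \<in> borel_measurable borel" unfolding h_def by measurable
      show "h (swv i j y) = - h y" for y
        by (simp add: h_def piSplus_swv[OF Cpos])
      show "0 \<le> h y" if "y $ i \<le> y $ j" for y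
      proof -
        obtain \<tau> where t: "piSplus C y = (\<chi> k. max (y $ k - \<tau>) 0)"
          using piSplus_tau[OF Cpos] by blast
        show ?thesis using max_ineq3[OF that, of \<tau>] unfolding h_def t by simp
      qed
      show "integrable (MM f) (\<lambda>v. h (x + v))" by (rule ih)
    qed
    also have "(\<integral>v. h (x + v) \<partial>MM f) = (x $ j - x $ i) + ((\<integral>v. v $ j \<partial>MM f) - (\<integral>v. v $ i \<partial>MM f)) - (P j - P i)"
      unfolding h_def P_def using ip iv pu
      by (simp add: integral_diff integral_add algebra_simps)
    also have "(\<integral>v. v $ j \<partial>MM f) = (\<integral>v. v $ i \<partial>(MM f :: (real^'n::{finite,linorder}) measure))" by (rule mean_eq)
    finally show ?thesis by simp
  qed
  define i1 where "i1 = Min (UNIV :: 'n set)"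
  define iN where "iN = Max (UNIV :: 'n set)"
  have i1k: "i1 \<le> k" and kiN: "k \<le> iN" for k
    unfolding i1_def iN_def by auto
  have i1N: "i1 \<noteq> iN"
  proof
    assume "i1 = iN"
    then have "\<forall>k. k = i1" using i1k kiN by (meson order_antisym)
    then have "(UNIV :: 'n set) = {i1}" by auto
    then have "card (UNIV::'n set) = card {i1}" by (rule arg_cong)
    then have "CARD('n) = 1" by simp
    then show False using n2 by simp
  qed
  define B where "B k = P k - x $ k" for k
  have Bmax: "Max (range B) = B i1"
  proof (rule Max_eqI)
    show "y \<le> B i1" if "y \<in> range B" for y
    proof -
      from that obtain k where "y = B k" by auto
      then show ?thesis using Pb[OF i1k[of k]] unfolding B_def by linarith
    qed
  qed auto
  have Bmin: "Min (range B) = B iN"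
  proof (rule Min_eqI)
    show "B iN \<le> y" if "y \<in> range B" for y
    proof -
      from that obtain k where "y = B k" by auto
      then show ?thesis using Pb[OF kiN[of k]] unfolding B_def by linarith
    qed
  qed auto
  have rB: "(\<lambda>i. bias (MM f) (piSplus C) x $ i) = B"
    by (simp add: fun_eq_iff bias1 B_def)
  define h where "h y = (piSplus C y $ i1 - piSplus C y $ iN) - (max (piS C y $ i1) 0 - max (piS C y $ iN) 0)"
    for y :: "real^'n::{finite,linorder}"
  have ih: "integrable (MM f) (\<lambda>v. h (x + v))"
    unfolding h_def using ip iqp by auto
  have hint: "(\<integral>v. h (x + v) \<partial>MM f) = (P i1 - P iN) - (Q i1 - Q iN)"
    unfolding h_def P_def Q_def using ip iqp by simp
  have Pc: "0 \<le> (\<integral>v. h (x + v) \<partial>MM f)"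
  proof (rule swap_ineq[OF i1N, where h=h])
    show "x $ i1 \<le> x $ iN" using sorted i1k by blast
    show "h \<in> borel_measurable borel" unfolding h_def by measurable
    show "h (swv i1 iN y) = - h y" for y
      by (simp add: h_def piSplus_swv[OF Cpos] piS_swv)
    show "0 \<le> h y" if "y $ i1 \<le> y $ iN" for y
    proof -
      obtain \<tau> where t: "piSplus C y = (\<chi> k. max (y $ k - \<tau>) 0)" "(\<Sum>k\<in>UNIV. max (y $ k - \<tau>) 0) = C"
        using piSplus_tau[OF Cpos] by blast
      define t' where "t' = ((\<Sum>k\<in>UNIV. y $ k) - C) / CARD('n)"
      have tt: "t' \<le> \<tau>" using tau_ge[OF t(2)] by (simp add: t'_def)
      have q: "piS C y = (\<chi> k. y $ k - t')" by (simp add: piS_formula t'_def)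
      show ?thesis using max_ineq1[OF that tt] unfolding h_def t q by simp
    qed
    show "integrable (MM f) (\<lambda>v. h (x + v))" by (rule ih)
  qed
  have Pd: "(\<integral>v. h (x + v) \<partial>MM f) \<le> (\<Sum>k\<in>UNIV. N k)"
  proof -
    have "(\<integral>v. h (x + v) \<partial>MM f) \<le> (\<integral>v. (\<Sum>k\<in>UNIV. negp (piS C (x + v) $ k)) \<partial>MM f)"
    proof (rule integral_mono[OF ih])
      show "integrable (MM f) (\<lambda>v. \<Sum>k\<in>UNIV. negp (piS C (x + v) $ k))" using iqn by auto
      fix v :: "real^'n::{finite,linorder}"
      define y where "y = x + v"
      obtain \<tau> where t: "piSplus C y = (\<chi> k. max (y $ k - \<tau>) 0)" "(\<Sum>k\<in>UNIV. max (y $ k - \<tau>) 0) = C"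
        using piSplus_tau[OF Cpos] by blast
      define t' where "t' = ((\<Sum>k\<in>UNIV. y $ k) - C) / CARD('n)"
      have tt: "t' \<le> \<tau>" using tau_ge[OF t(2)] by (simp add: t'_def)
      have tl: "\<tau> - t' \<le> (\<Sum>k\<in>UNIV. negp (y $ k - t'))" using tau_le[OF Cpos t(2)] by (simp add: t'_def)
      have q: "piS C y = (\<chi> k. y $ k - t')" by (simp add: piS_formula t'_def)
      have "h y \<le> \<tau> - t'" using max_ineq2[OF tt, of "y $ i1" "y $ iN"] unfolding h_def t q by simp
      also have "\<dots> \<le> (\<Sum>k\<in>UNIV. negp (piS C y $ k))" using tl by (simp add: q)
      finally show "h (x + v) \<le> (\<Sum>k\<in>UNIV. negp (piS C (x + v) $ k))" by (simp add: y_def)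
    qed
    also have "\<dots> = (\<Sum>k\<in>UNIV. N k)" unfolding N_def using iqn by (simp add: integral_sum)
    finally show ?thesis .
  qed
  have F1: "Q i1 - x$i1 - (Q iN - x$iN) \<le> B i1 - B iN" using hint Pc unfolding B_def by linarith
  have F2: "B i1 - B iN \<le> x$iN - x$i1" using Pa[OF i1k[of iN]] unfolding B_def by linarith
  have F3: "B i1 - B iN \<le> Q i1 - x$i1 - (Q iN - x$iN) + (\<Sum>k\<in>UNIV. N k)"
    using hint Pd unfolding B_def by linarith
  show ?thesis
    unfolding Let_def rB Bmax Bmin i1_def[symmetric] iN_def[symmetric] bias2 N_def[symmetric]
    using F1 F2 F3 by simp
qed

end


lemma sym_nn:
  fixes g :: "real \<Rightarrow> ennreal"
  assumes [measurable]: "g \<in> borel_measurable borel" and sym: "\<And>t. g (- t) = g t"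
  shows "(\<integral>\<^sup>+t. g t \<partial>lborel) = 2 * (\<integral>\<^sup>+t. g t * indicator {0..} t \<partial>lborel)"
proof -
  have "(\<integral>\<^sup>+t. g t \<partial>lborel) = (\<integral>\<^sup>+t. g t * indicator {0..} t + g t * indicator {..<0} t \<partial>lborel)"
    by (intro nn_integral_cong) (auto split: split_indicator)
  also have "\<dots> = (\<integral>\<^sup>+t. g t * indicator {0..} t \<partial>lborel) + (\<integral>\<^sup>+t. g t * indicator {..<0} t \<partial>lborel)"
    by (rule nn_integral_add) auto
  also have "(\<integral>\<^sup>+t. g t * indicator {..<0} t \<partial>lborel) = (\<integral>\<^sup>+t. g (0 + (-1) * t) * indicator {..<0} (0 + (-1) * t) \<partial>lborel)"
    using nn_integral_real_affine[of "\<lambda>t. g t * indicator {..<0} t" "-1" 0] by simp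
  also have "\<dots> = (\<integral>\<^sup>+t. g t * indicator {0<..} t \<partial>lborel)"
    by (intro nn_integral_cong) (auto simp: sym split: split_indicator)
  also have "\<dots> = (\<integral>\<^sup>+t. g t * indicator {0..} t \<partial>lborel)"
  proof (rule nn_integral_cong_AE)
    show "AE t in lborel. g t * indicator {0<..} t = g t * indicator {0..} t"
      using AE_lborel_singleton[of "0::real"] by eventually_elim (auto split: split_indicator)
  qed
  finally show ?thesis by (simp add: mult_2)
qed

lemma noise_dens_laplace:
  assumes b: "b > 0"
  shows "noise_dens (laplace_density b)"
proof
  show "0 \<le> laplace_density b t" for t using b by (simp add: laplace_density_def)
  show "laplace_density b \<in> borel_measurable borel"
    unfolding laplace_density_def[abs_def] by measurable
  have Eg: "ennreal (f t) * indicator {0..} t = ennreal (1/2) * ennreal (erlang_density 0 (1/b) t * t ^ i)"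
    if fd: "\<And>t. 0 \<le> t \<Longrightarrow> f t = 1/2 * (erlang_density 0 (1/b) t * t ^ i)" for f :: "real \<Rightarrow> real" and t i
  proof -
    have "ennreal (1/2) * ennreal (erlang_density 0 (1/b) t * t ^ i) = ennreal (1/2 * (erlang_density 0 (1/b) t * t ^ i))"
      by (rule ennreal_mult'[symmetric]) simp
    moreover have "ennreal (f t) * indicator {0..} t = ennreal (1/2 * (erlang_density 0 (1/b) t * t ^ i))"
    proof (cases "0 \<le> t")
      case True then show ?thesis unfolding fd[OF True] by simp
    next
      case False then show ?thesis by (simp add: erlang_density_def)
    qed
    ultimately show ?thesis by simp
  qed
  have E: "ennreal (laplace_density b t) * indicator {0..} t = ennreal (1/2) * ennreal (erlang_density 0 (1/b) t * t ^ 0)" for t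
    by (rule Eg) (use b in \<open>simp add: laplace_density_def erlang_density_def field_simps\<close>)
  have E1: "ennreal (\<bar>t\<bar> * laplace_density b t) * indicator {0..} t = ennreal (1/2) * ennreal (erlang_density 0 (1/b) t * t ^ 1)" for t
    by (rule Eg) (use b in \<open>simp add: laplace_density_def erlang_density_def field_simps\<close>)
  have "(\<integral>\<^sup>+t. ennreal (laplace_density b t) \<partial>lborel) = 2 * (\<integral>\<^sup>+t. ennreal (laplace_density b t) * indicator {0..} t \<partial>lborel)"
    by (rule sym_nn) (auto simp: laplace_density_def)
  also have "\<dots> = 2 * (ennreal (1/2) * (\<integral>\<^sup>+t. ennreal (erlang_density 0 (1/b) t * t ^ 0) \<partial>lborel))"
    by (simp only: E, subst nn_integral_cmult, auto)
  also have "(\<integral>\<^sup>+t. ennreal (erlang_density 0 (1/b) t * t ^ 0) \<partial>lborel) = 1"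
    using b by (subst nn_integral_erlang_ith_moment) auto
  also have "2 * (ennreal (1/2) * 1) = 1"
    using ennreal_mult'[of 2 "1/2", symmetric] by simp
  finally show "(\<integral>\<^sup>+t. ennreal (laplace_density b t) \<partial>lborel) = 1" .
  have "(\<integral>\<^sup>+t. ennreal (\<bar>t\<bar> * laplace_density b t) \<partial>lborel) = 2 * (\<integral>\<^sup>+t. ennreal (\<bar>t\<bar> * laplace_density b t) * indicator {0..} t \<partial>lborel)"
    by (rule sym_nn) (auto simp: laplace_density_def)
  also have "\<dots> = 2 * (ennreal (1/2) * (\<integral>\<^sup>+t. ennreal (erlang_density 0 (1/b) t * t ^ 1) \<partial>lborel))"
    by (simp only: E1, subst nn_integral_cmult, auto)
  also have "(\<integral>\<^sup>+t. ennreal (erlang_density 0 (1/b) t * t ^ 1) \<partial>lborel) = ennreal (fact (0 + 1) / (fact 0 * (1/b) ^ 1))"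
    by (rule nn_integral_erlang_ith_moment) (use b in simp)
  also have "2 * (ennreal (1/2) * ennreal (fact (0 + 1) / (fact 0 * (1/b) ^ 1))) < \<infinity>"
  proof -
    have "inverse (2::ennreal) = inverse (ennreal 2)" by simp
    also have "\<dots> = ennreal (inverse 2)" by (rule inverse_ennreal) simp
    also have "\<dots> < \<top>" by (rule ennreal_less_top)
    finally have "inverse (2::ennreal) < \<top>" .
    then show ?thesis by (simp add: ennreal_mult_less_top)
  qed
  finally show "(\<integral>\<^sup>+t. ennreal (\<bar>t\<bar> * laplace_density b t) \<partial>lborel) < \<infinity>" .
  show "laplace_density b s * laplace_density b (t + d) \<le> laplace_density b (s + d) * laplace_density b t"
    if "s \<le> t" "0 \<le> d" for s t d
  proof -
    have a: "\<bar>s + d\<bar> + \<bar>t\<bar> \<le> \<bar>s\<bar> + \<bar>t + d\<bar>" using that by (auto simp: abs_if)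
    define K where "K = 1 / (2 * b)"
    have nd: "laplace_density b y = K * exp (- (\<bar>y\<bar> / b))" for y
      by (simp add: laplace_density_def K_def)
    have "(\<bar>s + d\<bar> + \<bar>t\<bar>) / b \<le> (\<bar>s\<bar> + \<bar>t + d\<bar>) / b"
      by (rule divide_right_mono[OF a]) (use b in simp)
    moreover have "(\<bar>s + d\<bar> + \<bar>t\<bar>) / b = \<bar>s + d\<bar> / b + \<bar>t\<bar> / b" by (rule add_divide_distrib)
    moreover have "(\<bar>s\<bar> + \<bar>t + d\<bar>) / b = \<bar>s\<bar> / b + \<bar>t + d\<bar> / b" by (rule add_divide_distrib)
    ultimately have "- (\<bar>s\<bar> / b) + - (\<bar>t + d\<bar> / b) \<le> - (\<bar>s + d\<bar> / b) + - (\<bar>t\<bar> / b)"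
      by linarith
    then have "exp (- (\<bar>s\<bar> / b)) * exp (- (\<bar>t + d\<bar> / b)) \<le> exp (- (\<bar>s + d\<bar> / b)) * exp (- (\<bar>t\<bar> / b))"
      by (simp only: exp_add[symmetric] exp_le_cancel_iff)
    then have "(K * K) * (exp (- (\<bar>s\<bar> / b)) * exp (- (\<bar>t + d\<bar> / b))) \<le> (K * K) * (exp (- (\<bar>s + d\<bar> / b)) * exp (- (\<bar>t\<bar> / b)))"
      by (simp add: mult_left_mono)
    then show ?thesis by (simp add: nd mult_ac)
  qed
qed

lemma noise_dens_gauss:
  assumes s: "\<sigma> > 0"
  shows "noise_dens (normal_density 0 \<sigma>)"
proof
  show "0 \<le> normal_density 0 \<sigma> t" for t by simp
  show "normal_density 0 \<sigma> \<in> borel_measurable borel" by simp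
  show "(\<integral>\<^sup>+t. ennreal (normal_density 0 \<sigma> t) \<partial>lborel) = 1"
    using s by (subst nn_integral_eq_integral) auto
  have "integrable lborel (\<lambda>x. normal_density 0 \<sigma> x * \<bar>x - 0\<bar> ^ 1)"
    using s by (rule integrable_normal_moment_abs)
  then have "integrable lborel (\<lambda>x. \<bar>x\<bar> * normal_density 0 \<sigma> x)" by (simp add: mult.commute)
  then show "(\<integral>\<^sup>+t. ennreal (\<bar>t\<bar> * normal_density 0 \<sigma> t) \<partial>lborel) < \<infinity>"
    using integrableD(2)[of lborel "\<lambda>x. \<bar>x\<bar> * normal_density 0 \<sigma> x"] by (simp add: less_top)
  show "normal_density 0 \<sigma> s2 * normal_density 0 \<sigma> (t + d) \<le> normal_density 0 \<sigma> (s2 + d) * normal_density 0 \<sigma> t"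
    if "s2 \<le> t" "0 \<le> d" for s2 t d
  proof -
    have "d * s2 \<le> d * t" using that by (intro mult_left_mono) auto
    then have a: "((s2 + d)\<^sup>2) + (t\<^sup>2) \<le> (s2\<^sup>2) + ((t + d)\<^sup>2)" by (simp add: power2_eq_square algebra_simps)
    define X where "X = 2 * \<sigma>\<^sup>2"
    define K where "K = 1 / sqrt (2 * pi * \<sigma>\<^sup>2)"
    have X: "0 < X" using s by (simp add: X_def)
    have nd: "normal_density 0 \<sigma> y = K * exp (- (y\<^sup>2 / X))" for y
      by (simp add: normal_density_def K_def X_def)
    have "((s2 + d)\<^sup>2 + t\<^sup>2) / X \<le> (s2\<^sup>2 + (t + d)\<^sup>2) / X"
      by (rule divide_right_mono[OF a]) (use X in simp)
    then have "- (s2\<^sup>2 / X) + - ((t + d)\<^sup>2 / X) \<le> - ((s2 + d)\<^sup>2 / X) + - (t\<^sup>2 / X)"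
      by (simp only: add_divide_distrib)
    then have "exp (- (s2\<^sup>2 / X)) * exp (- ((t + d)\<^sup>2 / X)) \<le> exp (- ((s2 + d)\<^sup>2 / X)) * exp (- (t\<^sup>2 / X))"
      by (simp only: exp_add[symmetric] exp_le_cancel_iff)
    then have "(K * K) * (exp (- (s2\<^sup>2 / X)) * exp (- ((t + d)\<^sup>2 / X))) \<le> (K * K) * (exp (- ((s2 + d)\<^sup>2 / X)) * exp (- (t\<^sup>2 / X)))"
      by (simp add: mult_left_mono)
    then show ?thesis by (simp add: nd mult_ac)
  qed
qed


theorem theorem1:
  fixes x :: "real ^ 'n::{finite,linorder}" and C :: real and M :: "(real ^ 'n::{finite,linorder}) measure"
  assumes n2: "CARD('n) \<ge> 2"
    and Cpos: "C > 0"
    and xK: "x \<in> KSplus C"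
    and sorted: "\<forall>i j. i \<le> j \<longrightarrow> x $ i \<le> x $ j"
    and noise: "(\<exists>b>0. M = laplace_noise b) \<or> (\<exists>\<sigma>>0. M = gaussian_noise \<sigma>)"
  shows "let \<alpha> = Max (range (\<lambda>i. bias M (piSplus C) x $ i))
                 - Min (range (\<lambda>i. bias M (piSplus C) x $ i));
             Bp = bias M (\<lambda>y. pos_part_vec (piS C y)) x;
             i1 = Min (UNIV :: 'n::{finite,linorder} set); iN = Max (UNIV :: 'n::{finite,linorder} set)
         in \<alpha> \<ge> Bp $ i1 - Bp $ iN
          \<and> \<alpha> \<le> min (x $ iN - x $ i1)
                     (Bp $ i1 - Bp $ iN + (\<Sum>i\<in>UNIV. \<integral>\<eta>. negp (piS C (x + \<eta>) $ i) \<partial>M))"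
proof -
  from noise show ?thesis
  proof
    assume "\<exists>b>0. M = laplace_noise b"
    then obtain b where b: "b > 0" "M = laplace_noise b" by blast
    have MM: "M = MM (laplace_density b)" unfolding b(2) laplace_noise_def MM_def rho_def ..
    show ?thesis unfolding MM
      by (rule noise_dens.main[OF noise_dens_laplace[OF b(1)] n2 Cpos xK sorted])
  next
    assume "\<exists>\<sigma>>0. M = gaussian_noise \<sigma>"
    then obtain \<sigma> where s: "\<sigma> > 0" "M = gaussian_noise \<sigma>" by blast
    have MM: "M = MM (normal_density 0 \<sigma>)" unfolding s(2) gaussian_noise_def MM_def rho_def ..
    show ?thesis unfolding MM
      by (rule noise_dens.main[OF noise_dens_gauss[OF s(1)] n2 Cpos xK sorted])
  qed
qed

end
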